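(* Let $N=[n]$, let $v:2^N\to\mathbb{R}_+$ be a monotone valuation with $v(\emptyset)=0$, and let $X$ be a decision map for $v$. Let $p\in\mathbb{R}^n_+$ and $S=X(p)$. If (1) for every $i\in S$ there exists $T\subseteq N$ with $i\notin T$ and $v(S)-p(S)=v(T)-p(T)$, and (2) for every $i\notin S$ and every $T\subseteq N$ with $i\in T$, $v(S)-p(S)\ge v(T)-p(T\setminus\{i\})$, then $p$ is a pure Nash equilibrium of the pricing game defined by $v$ and $X$. Moreover, if $X$ is maximal, then $p$ is a pure Nash equilibrium if and only if (1) and (2) hold.
   Context: Pricing game: $N=[n]$ is a set of services, service $i$ controlled by seller $i$. A buyer has valuation $v:2^N\to\mathbb{R}_+$, monotone ($v(S)\le v(T)$ for $S\subseteq T$) with $v(\emptyset)=0$. For $p\in\mathbb{R}^n_+$ and $S\subseteq N$, $p(S)=\sum_{j\in S}p_j$. The demand correspondence is $D(v;p)=\arg\max_{S\subseteq N}\,(v(S)-p(S))$. A decision map is a function $X:\mathbb{R}^n_+\to 2^N$ with $X(p)\in D(v;p)$ for all $p$; it is maximal if for every $p$ there is no $S'\in D(v;p)$ with $X(p)\subsetneq S'$. Each seller $i$ chooses a price $p_i\in\mathbb{R}_+$ and has utility $u_i(p)=p_i\cdot\mathbf{1}\{i\in X(p)\}$. A price vector $p$ is a pure Nash equilibrium if $u_i(p)\ge u_i(p_i',p_{-i})$ for every seller $i$ and every $p_i'\in\mathbb{R}_+$. *)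

theory Defs
  imports Complex_Main
begin

text \<open>Services are the elements of a finite type 'n (so N = UNIV, |N| = CARD('n)).
  Price vectors are functions 'n \<Rightarrow> real; they lie in R^n_+ when all entries are nonnegative.\<close>

definition valuation :: "('n set \<Rightarrow> real) \<Rightarrow> bool" where
  "valuation v \<longleftrightarrow> v {} = 0 \<and> (\<forall>S. 0 \<le> v S) \<and> (\<forall>S T. S \<subseteq> T \<longrightarrow> v S \<le> v T)"

definition nonneg_prices :: "('n \<Rightarrow> real) \<Rightarrow> bool" where
  "nonneg_prices p \<longleftrightarrow> (\<forall>i. 0 \<le> p i)"

definition psum :: "('n \<Rightarrow> real) \<Rightarrow> 'n set \<Rightarrow> real" where
  "psum p S = (\<Sum>j\<in>S. p j)"

definition demand :: "('n set \<Rightarrow> real) \<Rightarrow> ('n \<Rightarrow> real) \<Rightarrow> 'n set set" where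
  "demand v p = {S. \<forall>T. v T - psum p T \<le> v S - psum p S}"

definition decision_map :: "('n set \<Rightarrow> real) \<Rightarrow> (('n \<Rightarrow> real) \<Rightarrow> 'n set) \<Rightarrow> bool" where
  "decision_map v X \<longleftrightarrow> (\<forall>p. nonneg_prices p \<longrightarrow> X p \<in> demand v p)"

definition maximal_decision_map :: "('n set \<Rightarrow> real) \<Rightarrow> (('n \<Rightarrow> real) \<Rightarrow> 'n set) \<Rightarrow> bool" where
  "maximal_decision_map v X \<longleftrightarrow> decision_map v X \<and>
     (\<forall>p. nonneg_prices p \<longrightarrow> \<not> (\<exists>S'\<in>demand v p. X p \<subset> S'))"

definition seller_utility :: "(('n \<Rightarrow> real) \<Rightarrow> 'n set) \<Rightarrow> ('n \<Rightarrow> real) \<Rightarrow> 'n \<Rightarrow> real" where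
  "seller_utility X p i = (if i \<in> X p then p i else 0)"

definition pure_nash :: "(('n \<Rightarrow> real) \<Rightarrow> 'n set) \<Rightarrow> ('n \<Rightarrow> real) \<Rightarrow> bool" where
  "pure_nash X p \<longleftrightarrow> nonneg_prices p \<and>
     (\<forall>i q. 0 \<le> q \<longrightarrow> seller_utility X (p(i := q)) i \<le> seller_utility X p i)"

end

theory Submission
  imports Defs
begin

lemma psum_upd_notin: "i \<notin> U \<Longrightarrow> psum (p(i:=q)) U = psum p U"
  unfolding psum_def by (rule sum.cong) auto

lemma psum_upd_in:
  fixes U :: "('n::finite) set"
  shows "i \<in> U \<Longrightarrow> psum (p(i:=q)) U = psum p (U - {i}) + q"
proof -
  assume i: "i \<in> U"
  have "psum (p(i:=q)) U = (p(i:=q)) i + psum (p(i:=q)) (U - {i})"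
    unfolding psum_def using i by (simp add: sum.remove)
  also have "psum (p(i:=q)) (U - {i}) = psum p (U - {i})"
    by (rule psum_upd_notin) auto
  finally show ?thesis by (simp only: fun_upd_same add.commute)
qed

lemma psum_split:
  fixes U :: "('n::finite) set"
  shows "i \<in> U \<Longrightarrow> psum p U = psum p (U - {i}) + p i"
  using psum_upd_in[of i U p "p i"] by simp

lemma nonneg_upd: "nonneg_prices p \<Longrightarrow> 0 \<le> q \<Longrightarrow> nonneg_prices (p(i:=q))"
  unfolding nonneg_prices_def by auto

theorem mainTheorem1:
  fixes v :: "('n::finite) set \<Rightarrow> real"
    and X :: "('n \<Rightarrow> real) \<Rightarrow> 'n set"
    and p :: "'n \<Rightarrow> real"
  assumes "valuation v"
    and "decision_map v X"
    and "nonneg_prices p"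
  defines "S \<equiv> X p"
  defines "C1 \<equiv> (\<forall>i\<in>S. \<exists>T. i \<notin> T \<and> v S - psum p S = v T - psum p T)"
  defines "C2 \<equiv> (\<forall>i. i \<notin> S \<longrightarrow> (\<forall>T. i \<in> T \<longrightarrow> v T - psum p (T - {i}) \<le> v S - psum p S))"
  shows "(C1 \<and> C2 \<longrightarrow> pure_nash X p)
         \<and> (maximal_decision_map v X \<longrightarrow> (pure_nash X p \<longleftrightarrow> C1 \<and> C2))"
proof -
  define u where "u = v S - psum p S"
  have "S \<in> demand v p" using assms(2,3) unfolding S_def decision_map_def by simp
  then have Sd: "\<And>T. v T - psum p T \<le> u" unfolding u_def demand_def by simp
  have Wd: "v T - psum (p(i:=q)) T \<le> v (X (p(i:=q))) - psum (p(i:=q)) (X (p(i:=q)))" if q: "0 \<le> q" for q i T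
  proof -
    have "X (p(i:=q)) \<in> demand v (p(i:=q))"
      using assms(2) nonneg_upd[OF assms(3) q] unfolding decision_map_def by simp
    then show ?thesis unfolding demand_def by simp
  qed
  have pn: "\<And>i. 0 \<le> p i" using assms(3) unfolding nonneg_prices_def by auto
  have A: "C1 \<and> C2 \<longrightarrow> pure_nash X p"
  proof
    assume c: "C1 \<and> C2"
    show "pure_nash X p"
      unfolding pure_nash_def
    proof (intro conjI allI impI)
      show "nonneg_prices p" by fact
      fix i q :: _ assume q: "0 \<le> (q::real)"
      define W where "W = X (p(i:=q))"
      show "seller_utility X (p(i := q)) i \<le> seller_utility X p i"
      proof (cases "i \<in> S")
        case True
        then have R: "seller_utility X p i = p i" unfolding seller_utility_def S_def by simp
        show ?thesis
        proof (cases "q \<le> p i")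
          case True then show ?thesis using R pn[of i] unfolding seller_utility_def by auto
        next
          case False
          have "i \<notin> W"
          proof
            assume iW: "i \<in> W"
            obtain T where T: "i \<notin> T" "u = v T - psum p T"
              using c True unfolding C1_def u_def by blast
            have "v T - psum (p(i:=q)) T \<le> v W - psum (p(i:=q)) W" unfolding W_def by (rule Wd[OF q])
            moreover have "psum (p(i:=q)) T = psum p T" using T psum_upd_notin by metis
            moreover have "psum (p(i:=q)) W = psum p (W - {i}) + q" using iW psum_upd_in by metis
            moreover have "psum p W = psum p (W - {i}) + p i" using iW psum_split by metis
            moreover have "v W - psum p W \<le> u" by (rule Sd)
            ultimately show False using T False by linarith
          qed
          then show ?thesis using R pn[of i] unfolding seller_utility_def W_def by auto
        qed
      next
        case False
        then have R: "seller_utility X p i = 0" unfolding seller_utility_def S_def by simp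
        show ?thesis
        proof (cases "q = 0")
          case True then show ?thesis using R unfolding seller_utility_def by auto
        next
          case qn: False
          have "i \<notin> W"
          proof
            assume iW: "i \<in> W"
            have "v S - psum (p(i:=q)) S \<le> v W - psum (p(i:=q)) W" unfolding W_def by (rule Wd[OF q])
            moreover have "psum (p(i:=q)) S = psum p S" using False psum_upd_notin by metis
            moreover have "psum (p(i:=q)) W = psum p (W - {i}) + q" using iW psum_upd_in by metis
            moreover have "v W - psum p (W - {i}) \<le> u" using c False iW unfolding C2_def u_def by blast
            ultimately show False using qn q unfolding u_def by linarith
          qed
          then show ?thesis using R unfolding seller_utility_def W_def by auto
        qed
      qed
    qed
  qed
  have B: "pure_nash X p \<longrightarrow> C1 \<and> C2"
  proof
    assume ne: "pure_nash X p"
    have dev: "\<And>i q. 0 \<le> q \<Longrightarrow> seller_utility X (p(i := q)) i \<le> seller_utility X p i"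
      using ne unfolding pure_nash_def by blast
    have "C1" unfolding C1_def
    proof
      fix i assume iS: "i \<in> S"
      show "\<exists>T. i \<notin> T \<and> v S - psum p S = v T - psum p T"
      proof (rule ccontr)
        assume nt: "\<not> ?thesis"
        define M where "M = (\<lambda>T. v T - psum p T) ` {T. i \<notin> T}"
        have fM: "finite M" unfolding M_def by simp
        have neM: "M \<noteq> {}" unfolding M_def by auto
        define m where "m = Max M"
        obtain T0 where T0: "i \<notin> T0" "m = v T0 - psum p T0"
          using Max_in[OF fM neM] unfolding m_def M_def by auto
        have mu: "m < u" using Sd[of T0] T0 nt unfolding u_def by fastforce
        have mle: "\<And>T. i \<notin> T \<Longrightarrow> v T - psum p T \<le> m"
          unfolding m_def M_def by (rule Max_ge) auto
        define d where "d = (u - m) / 2"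
        define q where "q = p i + d"
        have dpos: "d > 0" using mu d_def by simp
        have q0: "0 \<le> q" using pn[of i] dpos q_def by simp
        define W where "W = X (p(i:=q))"
        have "i \<notin> W"
        proof
          assume "i \<in> W"
          then have "seller_utility X (p(i := q)) i = q" unfolding seller_utility_def W_def by simp
          moreover have "seller_utility X p i = p i" using iS unfolding seller_utility_def S_def by simp
          ultimately show False using dev[OF q0, of i] dpos q_def by simp
        qed
        have "v S - psum (p(i:=q)) S \<le> v W - psum (p(i:=q)) W" unfolding W_def by (rule Wd[OF q0])
        moreover have "psum (p(i:=q)) S = psum p (S - {i}) + q" using iS psum_upd_in by metis
        moreover have "psum p S = psum p (S - {i}) + p i" using iS psum_split by metis
        moreover have "psum (p(i:=q)) W = psum p W" using \<open>i \<notin> W\<close> psum_upd_notin by metis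
        moreover have "v W - psum p W \<le> m" using mle \<open>i \<notin> W\<close> by blast
        ultimately have "v S - psum p S - d \<le> m" using q_def by linarith
        then show False using d_def dpos unfolding u_def by (simp add: field_simps)
      qed
    qed
    moreover have "C2" unfolding C2_def
    proof (intro allI impI)
      fix i T assume iS: "i \<notin> S" and iT: "i \<in> T"
      show "v T - psum p (T - {i}) \<le> v S - psum p S"
      proof (rule ccontr)
        assume "\<not> ?thesis"
        then have gt: "v T - psum p (T - {i}) > u" unfolding u_def by simp
        define q where "q = (v T - psum p (T - {i}) - u) / 2"
        have qpos: "q > 0" using gt q_def by simp
        define W where "W = X (p(i:=q))"
        have "i \<notin> W"
        proof
          assume "i \<in> W"
          then have "seller_utility X (p(i := q)) i = q" unfolding seller_utility_def W_def by simp
          moreover have "seller_utility X p i = 0" using iS unfolding seller_utility_def S_def by simp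
          ultimately show False using dev[of q i] qpos by simp
        qed
        have "v T - psum (p(i:=q)) T \<le> v W - psum (p(i:=q)) W" unfolding W_def by (rule Wd) (use qpos in simp)
        moreover have "psum (p(i:=q)) T = psum p (T - {i}) + q" using iT psum_upd_in by metis
        moreover have "psum (p(i:=q)) W = psum p W" using \<open>i \<notin> W\<close> psum_upd_notin by metis
        moreover have "v W - psum p W \<le> u" by (rule Sd)
        moreover have "2*q = v T - psum p (T - {i}) - u" using q_def by simp
        ultimately show False using qpos by linarith
      qed
    qed
    ultimately show "C1 \<and> C2" by blast
  qed
  show ?thesis using A B by blast
qed

end
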